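(* Let $f_1,f_2$ be odd entire functions with $f_1'(0)\neq0$, $f_2'(0)\neq 0$. For such $f$ with expansion $f(z)=a_1z+a_3z^3+a_5z^5+a_7z^7+O(z^9)$ put $p(f)=a_3^2-2a_1a_5$, $q(f)=3a_1^2a_7-3a_1a_3a_5+a_3^3$, and, when $(p(f),q(f))\neq(0,0)$, $\mu(f)=p(f)^3/q(f)^2\in\mathbb{C}P^1=\mathbb{C}\cup\{\infty\}$. Suppose $(p(f_i),q(f_i))\neq(0,0)$ for $i=1,2$ and $\mu(f_1)=\mu(f_2)$. Then there exist $\alpha,\beta\in\mathbb{C}$ and $a\in\mathbb{C}\setminus\{0\}$ such that $f_2(z)-f_1(az)e^{\alpha z^2+\beta}$ vanishes to order at least $9$ at $z=0$.
   Context: Vanishing to order at least $9$ at $0$ means the Taylor coefficients of degrees $0,\dots,8$ at $0$ are all zero (the paper writes this as congruence modulo $\mathcal{M}^9$, $\mathcal{M}$ the ideal of entire functions vanishing at $0$). *)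

theory Defs
  imports "HOL-Complex_Analysis.Complex_Analysis"
begin

definition tcoeff :: "(complex \<Rightarrow> complex) \<Rightarrow> nat \<Rightarrow> complex" where
  "tcoeff f k = (deriv ^^ k) f 0 / of_nat (fact k)"

definition odd_entire :: "(complex \<Rightarrow> complex) \<Rightarrow> bool" where
  "odd_entire f \<longleftrightarrow> f holomorphic_on UNIV \<and> (\<forall>z. f (- z) = - f z)"

definition pinv :: "(complex \<Rightarrow> complex) \<Rightarrow> complex" where
  "pinv f = (tcoeff f 3)^2 - 2 * tcoeff f 1 * tcoeff f 5"

definition qinv :: "(complex \<Rightarrow> complex) \<Rightarrow> complex" where
  "qinv f = 3 * (tcoeff f 1)^2 * tcoeff f 7 - 3 * tcoeff f 1 * tcoeff f 3 * tcoeff f 5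
            + (tcoeff f 3)^3"

text \<open>mu f = p^3/q^2 in CP^1 = C \<union> {\<infinity>}; None represents \<infinity>
  (only meaningful when (p,q) \<noteq> (0,0)).\<close>
definition mu :: "(complex \<Rightarrow> complex) \<Rightarrow> complex option" where
  "mu f = (if qinv f = 0 then None else Some ((pinv f)^3 / (qinv f)^2))"

definition vanishes_to_order :: "nat \<Rightarrow> (complex \<Rightarrow> complex) \<Rightarrow> bool" where
  "vanishes_to_order n g \<longleftrightarrow> (\<forall>k<n. tcoeff g k = 0)"

end

theory Submission
  imports Defs
begin
lemma tcoeff_fps:
  assumes "f has_fps_expansion F"
  shows "tcoeff f k = F $ k"
  using fps_nth_fps_expansion[OF assms, of k] by (simp add: tcoeff_def)

lemma odd_fps:
  assumes "odd_entire f"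
  shows "f has_fps_expansion fps_expansion f 0"
    and "even k \<Longrightarrow> fps_expansion f 0 $ k = 0"
proof -
  have hol: "f holomorphic_on UNIV" using assms by (simp add: odd_entire_def)
  show H: "f has_fps_expansion fps_expansion f 0"
    using hol by (intro has_fps_expansion_fps_expansion) auto
  let ?F = "fps_expansion f 0"
  have m: "(\<lambda>z::complex. - z) has_fps_expansion - fps_X"
    by (intro fps_expansion_intros)
  have "(f \<circ> (\<lambda>z. - z)) has_fps_expansion fps_compose ?F (- fps_X)"
    by (rule has_fps_expansion_compose[OF H m]) simp
  also have "f \<circ> (\<lambda>z. - z) = (\<lambda>z. - f z)"
    using assms by (auto simp: odd_entire_def fun_eq_iff)
  finally have 1: "(\<lambda>z. - f z) has_fps_expansion fps_compose ?F (- fps_X)" .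
  have 2: "(\<lambda>z. - f z) has_fps_expansion - ?F"
    using H by (intro fps_expansion_intros)
  have "fps_compose ?F (- fps_X) = - ?F"
    using fps_expansion_unique_complex[OF 1 2] .
  hence "fps_compose ?F (- fps_X) $ k = (- ?F) $ k" by simp
  moreover assume "even k"
  ultimately show "?F $ k = 0"
    by (simp add: fps_compose_uminus')
qed

lemma expE:
  fixes \<alpha> :: complex
  shows "(\<lambda>z. exp (\<alpha> * z^2)) has_fps_expansion fps_compose (fps_exp 1) (fps_const \<alpha> * fps_X^2)"
proof -
  have "((\<lambda>x. exp (1 * x)) \<circ> (\<lambda>z. \<alpha> * z^2)) has_fps_expansion fps_compose (fps_exp 1) (fps_const \<alpha> * fps_X^2)"
    by (intro has_fps_expansion_compose fps_expansion_intros) auto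
  thus ?thesis by (simp add: o_def)
qed

lemma expE_nth:
  fixes \<alpha> :: complex
  shows "fps_compose (fps_exp 1) (fps_const \<alpha> * fps_X^2) $ n =
     (if even n then \<alpha>^(n div 2) / fact (n div 2) else 0)"
proof -
  have "fps_compose (fps_exp 1) (fps_const \<alpha> * fps_X^2) $ n =
        (\<Sum>i=0..n. (1 / fact i) * ((fps_const \<alpha> * fps_X^2)^i $ n))"
    by (simp add: fps_compose_nth)
  also have "\<dots> = (\<Sum>i=0..n. (if n = 2*i then \<alpha>^i / fact i else 0))"
    by (intro sum.cong refl) (simp add: power_mult_distrib fps_const_power power_mult[symmetric] fps_X_power_mult_nth)
  also have "\<dots> = (if even n then \<alpha>^(n div 2) / fact (n div 2) else 0)"
  proof (cases "even n")
    case True then obtain m where "n = 2*m" by (elim evenE)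
    thus ?thesis by (simp add: sum.delta')
  next
    case False
    hence "\<And>i. n \<noteq> 2*i" by presburger
    thus ?thesis using False by simp
  qed
  finally show ?thesis .
qed

lemma lam_exists:
  fixes p1 q1 p2 q2 :: complex
  assumes "(p1, q1) \<noteq> (0, 0)" "(p2, q2) \<noteq> (0, 0)"
    and "(if q1 = 0 then None else Some (p1^3 / q1^2)) = (if q2 = 0 then None else Some (p2^3 / q2^2))"
  shows "\<exists>l. l \<noteq> 0 \<and> l^2 * p1 = p2 \<and> l^3 * q1 = q2"
proof (cases "q1 = 0")
  case True
  with assms have q2: "q2 = 0" by (auto split: if_splits)
  with True assms have "p1 \<noteq> 0" "p2 \<noteq> 0" by auto
  define l where "l = csqrt (p2 / p1)"
  have "l^2 = p2/p1" unfolding l_def by simp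
  thus ?thesis using \<open>p1 \<noteq> 0\<close> \<open>p2 \<noteq> 0\<close> True q2
    by (intro exI[of _ l]) (auto simp: field_simps)
next
  case False
  with assms have q2: "q2 \<noteq> 0" and e: "p1^3 / q1^2 = p2^3/q2^2" by (auto split: if_splits)
  hence e': "p1^3 * q2^2 = p2^3 * q1^2" using False by (simp add: field_simps)
  show ?thesis
  proof (cases "p1 = 0")
    case True
    hence p2: "p2 = 0" using e' False q2 by simp
    define l where "l = exp (Ln (q2/q1) / 3)"
    have "l^3 = exp (of_nat 3 * (Ln (q2/q1) / 3))" unfolding l_def by (rule exp_of_nat_mult[symmetric])
    also have "\<dots> = q2/q1" using False q2 by simp
    finally show ?thesis using True p2 False q2
      by (intro exI[of _ l]) (auto simp: field_simps l_def)
  next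
    case p1: False
    hence p2: "p2 \<noteq> 0" using e' False q2 by auto
    define l where "l = q2*p1/(q1*p2)"
    have A: "l^2 * p1 = p2"
    proof -
      have "l^2 * p1 * (q1^2 * p2^2) = q2^2 * p1^3" unfolding l_def using False p2
        by (simp add: field_simps power2_eq_square power3_eq_cube)
      also have "\<dots> = p2 * (q1^2 * p2^2)" using e' by (simp add: algebra_simps power2_eq_square power3_eq_cube)
      finally show ?thesis using False p2 by simp
    qed
    have B: "l^3 * q1 = q2"
    proof -
      have "l^3 * q1 * (q1^2 * p2^3) = q2^3 * p1^3" unfolding l_def using False p2
        by (simp add: field_simps power2_eq_square power3_eq_cube)
      also have "\<dots> = q2 * (q1^2 * p2^3)" using e' by (simp add: algebra_simps power2_eq_square power3_eq_cube)
      finally show ?thesis using False p2 by simp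
    qed
    show ?thesis using A B p1 p2 False q2 by (intro exI[of _ l]) (auto simp: l_def)
  qed
qed

lemma alg:
  fixes a1 a3 a5 a7 A1 A3 A5 A7 :: complex
  assumes "a1 \<noteq> 0" "A1 \<noteq> 0"
    and "l \<noteq> 0" "l^2 * (a3^2 - 2*a1*a5) = A3^2 - 2*A1*A5"
    and "l^3 * (3*a1^2*a7 - 3*a1*a3*a5 + a3^3) = 3*A1^2*A7 - 3*A1*A3*A5 + A3^3"
  shows "\<exists>\<alpha> c a. c \<noteq> 0 \<and> a \<noteq> 0 \<and> A1 = c*(a*a1) \<and> A3 = c*(a^3*a3 + \<alpha>*(a*a1))
     \<and> A5 = c*(a^5*a5 + \<alpha>*(a^3*a3) + \<alpha>^2/2*(a*a1))
     \<and> A7 = c*(a^7*a7 + \<alpha>*(a^5*a5) + \<alpha>^2/2*(a^3*a3) + \<alpha>^3/6*(a*a1))"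
proof -
  define a where "a = csqrt (l*a1/A1)"
  have a2: "a^2 = l*a1/A1" unfolding a_def by simp
  have a0: "a \<noteq> 0" using a2 assms by auto
  define c where "c = l / a^3"
  have c0: "c \<noteq> 0" using a0 assms by (simp add: c_def)
  have ca: "c * a^3 = l" using a0 by (simp add: c_def)
  define \<alpha> where "\<alpha> = (A3/c - a^3*a3)/(a*a1)"
  define b1 where "b1 = c*(a*a1)"
  define b3 where "b3 = c*(a^3*a3 + \<alpha>*(a*a1))"
  define b5 where "b5 = c*(a^5*a5 + \<alpha>*(a^3*a3) + \<alpha>^2/2*(a*a1))"
  define b7 where "b7 = c*(a^7*a7 + \<alpha>*(a^5*a5) + \<alpha>^2/2*(a^3*a3) + \<alpha>^3/6*(a*a1))"
  have e1: "b1 = A1"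
  proof -
    have "b1 = l * a1 / a^2" unfolding b1_def c_def using a0 by (simp add: field_simps power2_eq_square power3_eq_cube)
    thus ?thesis using a2 assms a0 by (simp add: field_simps)
  qed
  have e3: "b3 = A3" unfolding b3_def \<alpha>_def using a0 c0 assms by (simp add: field_simps)
  have P: "b3^2 - 2*b1*b5 = (c*a^3)^2 * (a3^2 - 2*a1*a5)"
    unfolding b1_def b3_def b5_def by (simp add: field_simps) algebra
  have Q: "3*b1^2*b7 - 3*b1*b3*b5 + b3^3 = (c*a^3)^3 * (3*a1^2*a7 - 3*a1*a3*a5 + a3^3)"
    unfolding b1_def b3_def b5_def b7_def by (simp add: field_simps) algebra
  have e5: "b5 = A5"
  proof -
    have "2*A1*b5 = 2*A1*A5" using P assms(4) e1 e3 ca by simp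
    thus ?thesis using assms by simp
  qed
  have e7: "b7 = A7"
  proof -
    have "3*A1^2*b7 = 3*A1^2*A7" using Q assms(5) e1 e3 e5 ca by simp
    thus ?thesis using assms by simp
  qed
  show ?thesis
    using e1 e3 e5 e7 c0 a0 unfolding b1_def b3_def b5_def b7_def by blast
qed

theorem lemma2:
  fixes f1 f2 :: "complex \<Rightarrow> complex"
  assumes "odd_entire f1" and "odd_entire f2"
    and "deriv f1 0 \<noteq> 0" and "deriv f2 0 \<noteq> 0"
    and "(pinv f1, qinv f1) \<noteq> (0, 0)" and "(pinv f2, qinv f2) \<noteq> (0, 0)"
    and "mu f1 = mu f2"
  shows "\<exists>\<alpha> \<beta> a. a \<noteq> 0 \<and>
           vanishes_to_order 9 (\<lambda>z. f2 z - f1 (a * z) * exp (\<alpha> * z^2 + \<beta>))"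
proof -
  define F1 where "F1 = fps_expansion f1 0"
  define F2 where "F2 = fps_expansion f2 0"
  have H1: "f1 has_fps_expansion F1" and Z1: "\<And>k. even k \<Longrightarrow> F1 $ k = 0"
    using odd_fps[OF assms(1)] unfolding F1_def by auto
  have H2: "f2 has_fps_expansion F2" and Z2: "\<And>k. even k \<Longrightarrow> F2 $ k = 0"
    using odd_fps[OF assms(2)] unfolding F2_def by auto
  have T1: "\<And>k. tcoeff f1 k = F1 $ k" using tcoeff_fps[OF H1] .
  have T2: "\<And>k. tcoeff f2 k = F2 $ k" using tcoeff_fps[OF H2] .
  have d1: "F1 $ 1 \<noteq> 0" using assms(3) T1[of 1] by (simp add: tcoeff_def)
  have d2: "F2 $ 1 \<noteq> 0" using assms(4) T2[of 1] by (simp add: tcoeff_def)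
  obtain l where l: "l \<noteq> 0" "l^2 * pinv f1 = pinv f2" "l^3 * qinv f1 = qinv f2"
    using lam_exists[OF assms(5,6)] assms(7) unfolding mu_def by blast
  obtain \<alpha> c a where ac: "c \<noteq> 0" "a \<noteq> 0"
    "F2$1 = c*(a*F1$1)" "F2$3 = c*(a^3*F1$3 + \<alpha>*(a*F1$1))"
    "F2$5 = c*(a^5*F1$5 + \<alpha>*(a^3*F1$3) + \<alpha>^2/2*(a*F1$1))"
    "F2$7 = c*(a^7*F1$7 + \<alpha>*(a^5*F1$5) + \<alpha>^2/2*(a^3*F1$3) + \<alpha>^3/6*(a*F1$1))"
    using alg[OF d1 d2 l(1)] l(2,3) unfolding pinv_def qinv_def T1 T2 by metis
  define \<beta> where "\<beta> = Ln c"
  have eb: "exp \<beta> = c" using ac by (simp add: \<beta>_def)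
  define E where "E = fps_compose (fps_exp 1) (fps_const \<alpha> * fps_X^2)"
  have HA: "(\<lambda>z. f1 (a * z)) has_fps_expansion fps_compose F1 (fps_const a * fps_X)"
  proof -
    have "(f1 \<circ> (\<lambda>z. a * z)) has_fps_expansion fps_compose F1 (fps_const a * fps_X)"
      by (intro has_fps_expansion_compose[OF H1] fps_expansion_intros) auto
    thus ?thesis by (simp add: o_def)
  qed
  have HE: "(\<lambda>z. exp (\<alpha> * z^2 + \<beta>)) has_fps_expansion E * fps_const (exp \<beta>)"
  proof -
    have "(\<lambda>z. exp (\<alpha> * z^2) * exp \<beta>) has_fps_expansion E * fps_const (exp \<beta>)"
      unfolding E_def by (intro fps_expansion_intros expE)
    thus ?thesis by (simp add: exp_add)
  qed
  have HG: "(\<lambda>z. f2 z - f1 (a * z) * exp (\<alpha> * z^2 + \<beta>)) has_fps_expansion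
      F2 - fps_compose F1 (fps_const a * fps_X) * (E * fps_const (exp \<beta>))"
    by (intro fps_expansion_intros H2 HA HE)
  have "vanishes_to_order 9 (\<lambda>z. f2 z - f1 (a * z) * exp (\<alpha> * z^2 + \<beta>))"
    unfolding vanishes_to_order_def tcoeff_fps[OF HG]
  proof (intro allI impI)
    fix k :: nat assume "k < 9"
    have An: "\<And>n. fps_compose F1 (fps_const a * fps_X) $ n = a^n * F1$n"
      by (simp add: fps_compose_linear)
    have En: "\<And>n. E $ n = (if even n then \<alpha>^(n div 2) / fact (n div 2) else 0)"
      unfolding E_def by (rule expE_nth)
    have key: "(F2 - fps_compose F1 (fps_const a * fps_X) * (E * fps_const (exp \<beta>))) $ k
       = F2$k - (\<Sum>i=0..k. a^i * F1$i * (E$(k-i) * c))"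
      by (simp only: fps_sub_nth, subst fps_mult_nth) (simp add: An eb)
    have iv: "{0..0::nat} = {0}" "{0..1::nat} = {0,1}" "{0..2::nat} = {0,1,2}" "{0..3::nat} = {0,1,2,3}"
      "{0..4::nat} = {0,1,2,3,4}" "{0..5::nat} = {0,1,2,3,4,5}" "{0..6::nat} = {0,1,2,3,4,5,6}"
      "{0..7::nat} = {0,1,2,3,4,5,6,7}" "{0..8::nat} = {0,1,2,3,4,5,6,7,8}" by auto
    have z: "F1$0 = 0" "F1$2 = 0" "F1$4 = 0" "F1$6 = 0" "F1$8 = 0"
         "F2$0 = 0" "F2$2 = 0" "F2$4 = 0" "F2$6 = 0" "F2$8 = 0" by (simp_all add: Z1 Z2)
    have s1: "F2 $ Suc 0 = c*(a*F1$Suc 0)" using ac(3) by simp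
    from \<open>k < 9\<close> have "k = 0 \<or> k = 1 \<or> k = 2 \<or> k = 3 \<or> k = 4 \<or> k = 5 \<or> k = 6 \<or> k = 7 \<or> k = 8" by auto
    hence "F2$k - (\<Sum>i=0..k. a^i * F1$i * (E$(k-i) * c)) = 0"
      by (elim disjE) (simp_all add: iv En z ac(3-6) s1 fact_numeral field_simps)
    thus "(F2 - fps_compose F1 (fps_const a * fps_X) * (E * fps_const (exp \<beta>))) $ k = 0"
      using key by simp
  qed
  thus ?thesis using ac by blast
qed

end
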